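(* Let $G$ be a graph and $r\ge4$. Let $\{A,B\}$ be an $r$-local $2$-separation of $G$ with separator $\{a',v\}$ such that $a'v$ is an edge of $G$, and let $\{A',B'\}$ be an $r$-local $2$-separation of $G$ with separator $\{a,v\}$ such that $av$ is an edge of $G$ and $a\ne a'$. Suppose that $a\in A$ and $a'\in A'$, and that $v$ is not an $r$-local cutvertex of $G$. Then $B\cap B'=\{v\}$.
   Context: Ball $B_r(v)$: the subgraph of all vertices and edges on closed walks of length $\le r$ through $v$; $v$ is an $r$-local cutvertex if $B_r(v)-v$ is disconnected. For $X=\{v_0,v_1\}$, $N(X)$ is the set of vertices outside $X$ adjacent to a vertex of $X$; the connectivity graph $C_r(v_0,v_1)$ has vertex set $N(X)$, with $a,b$ adjacent if for some $i\in\{0,1\}$ they lie in the same component of $B_r(v_i)-v_0-v_1$. $X$ is an $r$-local $2$-separator if $C_r(v_0,v_1)$ is disconnected and $d_G(v_0,v_1)\le r/2$. An $r$-local $2$-separation with separator $X$ is a pair $\{A,B\}$ with $A\cap B=X$ an $r$-local 2-separator such that $A\setminus X$ and $B\setminus X$ are nonempty and partition $N(X)$ so that the vertex set of each component of $C_r(v_0,v_1)$ lies in exactly one of them (so $A\cup B=X\cup N(X)$). *)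

theory Defs
  imports Main
begin

definition graph :: "'a set \<Rightarrow> ('a \<Rightarrow> 'a \<Rightarrow> bool) \<Rightarrow> bool" where
  "graph V E \<longleftrightarrow> finite V \<and> (\<forall>x y. E x y \<longrightarrow> x \<in> V \<and> y \<in> V \<and> E y x \<and> x \<noteq> y)"

text \<open>A walk is a nonempty list of vertices, consecutive ones adjacent;
its length is the number of edges, i.e. length xs - 1.\<close>
definition walk :: "('a \<Rightarrow> 'a \<Rightarrow> bool) \<Rightarrow> 'a list \<Rightarrow> bool" where
  "walk E xs \<longleftrightarrow> xs \<noteq> [] \<and> (\<forall>i. Suc i < length xs \<longrightarrow> E (xs ! i) (xs ! Suc i))"

text \<open>Closed walk through v of length at most r (w.l.o.g. starting and ending at v).\<close>
definition closed_walk_at :: "('a \<Rightarrow> 'a \<Rightarrow> bool) \<Rightarrow> nat \<Rightarrow> 'a \<Rightarrow> 'a list \<Rightarrow> bool" where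
  "closed_walk_at E r v xs \<longleftrightarrow> walk E xs \<and> hd xs = v \<and> last xs = v \<and> length xs - 1 \<le> r"

definition ballV :: "('a \<Rightarrow> 'a \<Rightarrow> bool) \<Rightarrow> nat \<Rightarrow> 'a \<Rightarrow> 'a set" where
  "ballV E r v = {x. \<exists>xs. closed_walk_at E r v xs \<and> x \<in> set xs}"

definition ballE :: "('a \<Rightarrow> 'a \<Rightarrow> bool) \<Rightarrow> nat \<Rightarrow> 'a \<Rightarrow> 'a \<Rightarrow> 'a \<Rightarrow> bool" where
  "ballE E r v x y \<longleftrightarrow> (\<exists>xs i. closed_walk_at E r v xs \<and> Suc i < length xs \<and>
      ((xs ! i = x \<and> xs ! Suc i = y) \<or> (xs ! i = y \<and> xs ! Suc i = x)))"

definition same_comp :: "'a set \<Rightarrow> ('a \<Rightarrow> 'a \<Rightarrow> bool) \<Rightarrow> 'a \<Rightarrow> 'a \<Rightarrow> bool" where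
  "same_comp W F x y \<longleftrightarrow> x \<in> W \<and> y \<in> W \<and> (\<lambda>a b. a \<in> W \<and> b \<in> W \<and> F a b)\<^sup>*\<^sup>* x y"

definition disconnected :: "'a set \<Rightarrow> ('a \<Rightarrow> 'a \<Rightarrow> bool) \<Rightarrow> bool" where
  "disconnected W F \<longleftrightarrow> (\<exists>x\<in>W. \<exists>y\<in>W. \<not> same_comp W F x y)"

definition local_cutvertex :: "'a set \<Rightarrow> ('a \<Rightarrow> 'a \<Rightarrow> bool) \<Rightarrow> nat \<Rightarrow> 'a \<Rightarrow> bool" where
  "local_cutvertex V E r v \<longleftrightarrow> v \<in> V \<and> disconnected (ballV E r v - {v}) (ballE E r v)"

definition nbhd2 :: "'a set \<Rightarrow> ('a \<Rightarrow> 'a \<Rightarrow> bool) \<Rightarrow> 'a \<Rightarrow> 'a \<Rightarrow> 'a set" where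
  "nbhd2 V E v0 v1 = {x \<in> V - {v0, v1}. E x v0 \<or> E x v1}"

text \<open>Adjacency of the connectivity graph C_r(v0,v1) on vertex set N(X).\<close>
definition conn_adj :: "'a set \<Rightarrow> ('a \<Rightarrow> 'a \<Rightarrow> bool) \<Rightarrow> nat \<Rightarrow> 'a \<Rightarrow> 'a \<Rightarrow> 'a \<Rightarrow> 'a \<Rightarrow> bool" where
  "conn_adj V E r v0 v1 a b \<longleftrightarrow> a \<in> nbhd2 V E v0 v1 \<and> b \<in> nbhd2 V E v0 v1 \<and> a \<noteq> b \<and>
     (\<exists>w \<in> {v0, v1}. same_comp (ballV E r w - {v0, v1}) (ballE E r w) a b)"

definition dist_le :: "('a \<Rightarrow> 'a \<Rightarrow> bool) \<Rightarrow> 'a \<Rightarrow> 'a \<Rightarrow> nat \<Rightarrow> bool" where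
  "dist_le E x y k \<longleftrightarrow> (\<exists>xs. walk E xs \<and> hd xs = x \<and> last xs = y \<and> length xs - 1 \<le> k)"

definition local_2_separator :: "'a set \<Rightarrow> ('a \<Rightarrow> 'a \<Rightarrow> bool) \<Rightarrow> nat \<Rightarrow> 'a \<Rightarrow> 'a \<Rightarrow> bool" where
  "local_2_separator V E r v0 v1 \<longleftrightarrow> v0 \<in> V \<and> v1 \<in> V \<and> v0 \<noteq> v1 \<and>
     disconnected (nbhd2 V E v0 v1) (conn_adj V E r v0 v1) \<and>
     (\<exists>k. 2 * k \<le> r \<and> dist_le E v0 v1 k)"

definition local_2_separation :: "'a set \<Rightarrow> ('a \<Rightarrow> 'a \<Rightarrow> bool) \<Rightarrow> nat \<Rightarrow> 'a set \<Rightarrow> 'a set \<Rightarrow> 'a \<Rightarrow> 'a \<Rightarrow> bool" where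
  "local_2_separation V E r A B v0 v1 \<longleftrightarrow>
     local_2_separator V E r v0 v1 \<and>
     A \<inter> B = {v0, v1} \<and>
     A \<union> B = {v0, v1} \<union> nbhd2 V E v0 v1 \<and>
     A - {v0, v1} \<noteq> {} \<and> B - {v0, v1} \<noteq> {} \<and>
     (\<forall>x \<in> nbhd2 V E v0 v1. \<forall>y \<in> nbhd2 V E v0 v1.
        same_comp (nbhd2 V E v0 v1) (conn_adj V E r v0 v1) x y \<longrightarrow> (x \<in> A \<longleftrightarrow> y \<in> A))"

end

theory Submission
  imports Defs
begin

lemma walk_single: "walk E [x]"
  by (simp add: walk_def)

lemma walk_Cons2: "walk E (x # y # xs) \<longleftrightarrow> E x y \<and> walk E (y # xs)"
proof
  assume h: "walk E (x # y # xs)"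
  have al: "\<forall>i. Suc i < length (x # y # xs) \<longrightarrow> E ((x # y # xs) ! i) ((x # y # xs) ! Suc i)"
    using h unfolding walk_def by blast
  have "E x y" using spec[OF al, of 0] by simp
  moreover have "walk E (y # xs)" unfolding walk_def
  proof (intro conjI allI impI)
    fix i assume "Suc i < length (y # xs)"
    then show "E ((y # xs) ! i) ((y # xs) ! Suc i)" using spec[OF al, of "Suc i"] by simp
  qed simp
  ultimately show "E x y \<and> walk E (y # xs)" by simp
next
  assume h: "E x y \<and> walk E (y # xs)"
  have al: "\<forall>i. Suc i < length (y # xs) \<longrightarrow> E ((y # xs) ! i) ((y # xs) ! Suc i)"
    using h unfolding walk_def by blast
  show "walk E (x # y # xs)" unfolding walk_def
  proof (intro conjI allI impI)
    fix i assume i: "Suc i < length (x # y # xs)"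
    show "E ((x # y # xs) ! i) ((x # y # xs) ! Suc i)"
    proof (cases i)
      case 0 then show ?thesis using h by simp
    next
      case (Suc j) then show ?thesis using i spec[OF al, of j] by simp
    qed
  qed simp
qed

lemma path_to_set:
  assumes "(\<lambda>p q. p \<in> W \<and> q \<in> W \<and> F p q)\<^sup>*\<^sup>* x y"
  shows "x \<in> W \<Longrightarrow> y \<in> T \<Longrightarrow> x \<notin> T \<Longrightarrow>
    \<exists>z\<in>T. \<exists>u. (\<lambda>p q. p \<in> W - T \<and> q \<in> W - T \<and> F p q)\<^sup>*\<^sup>* x u \<and> u \<in> W - T \<and> z \<in> W \<and> F u z"
  using assms
proof (induction rule: converse_rtranclp_induct)
  case base
  then show ?case by simp
next
  case (step x x')
  show ?case
  proof (cases "x' \<in> T")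
    case True
    then show ?thesis using step by blast
  next
    case False
    then obtain z u where zT: "z \<in> T" and pa: "(\<lambda>p q. p \<in> W - T \<and> q \<in> W - T \<and> F p q)\<^sup>*\<^sup>* x' u"
      and uu: "u \<in> W - T" "z \<in> W" "F u z" using step by blast
    have st: "(\<lambda>p q. p \<in> W - T \<and> q \<in> W - T \<and> F p q) x x'" using step False by simp
    have "(\<lambda>p q. p \<in> W - T \<and> q \<in> W - T \<and> F p q)\<^sup>*\<^sup>* x u"
      by (rule converse_rtranclp_into_rtranclp[of "(\<lambda>p q. p \<in> W - T \<and> q \<in> W - T \<and> F p q)", OF st pa])
    then show ?thesis using zT uu by blast
  qed
qed

lemma rt_mono:
  assumes "(\<lambda>p q. p \<in> W \<and> q \<in> W \<and> F p q)\<^sup>*\<^sup>* x y" "W \<subseteq> W'"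
  shows "(\<lambda>p q. p \<in> W' \<and> q \<in> W' \<and> F p q)\<^sup>*\<^sup>* x y"
  using assms(1)
  by (induction rule: rtranclp_induct) (use assms(2) in \<open>auto intro: rtranclp.rtrancl_into_rtrancl\<close>)

theorem lemma5p11:
  fixes V :: "'a set" and E :: "'a \<Rightarrow> 'a \<Rightarrow> bool" and r :: nat
    and A B A' B' :: "'a set" and a a' v :: 'a
  assumes "graph V E"
    and "r \<ge> 4"
    and "local_2_separation V E r A B a' v" and "E a' v"
    and "local_2_separation V E r A' B' a v" and "E a v"
    and "a \<noteq> a'"
    and "a \<in> A" and "a' \<in> A'"
    and "\<not> local_cutvertex V E r v"
  shows "B \<inter> B' = {v}"
proof -
  have sym: "\<And>p q. E p q \<Longrightarrow> E q p" and inV: "\<And>p q. E p q \<Longrightarrow> p \<in> V \<and> q \<in> V"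
    and irr: "\<And>p q. E p q \<Longrightarrow> p \<noteq> q"
    using assms(1) unfolding graph_def by blast+
  note S1 = assms(3)[unfolded local_2_separation_def]
  note S2 = assms(5)[unfolded local_2_separation_def]
  have AB: "A \<inter> B = {a', v}" "A \<union> B = {a', v} \<union> nbhd2 V E a' v" using S1 by auto
  have AB': "A' \<inter> B' = {a, v}" "A' \<union> B' = {a, v} \<union> nbhd2 V E a v" using S2 by auto
  have cls1: "\<And>x y. x \<in> nbhd2 V E a' v \<Longrightarrow> y \<in> nbhd2 V E a' v \<Longrightarrow>
        same_comp (nbhd2 V E a' v) (conn_adj V E r a' v) x y \<Longrightarrow> (x \<in> A \<longleftrightarrow> y \<in> A)"
    using S1 by blast
  have cls2: "\<And>x y. x \<in> nbhd2 V E a v \<Longrightarrow> y \<in> nbhd2 V E a v \<Longrightarrow>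
        same_comp (nbhd2 V E a v) (conn_adj V E r a v) x y \<Longrightarrow> (x \<in> A' \<longleftrightarrow> y \<in> A')"
    using S2 by blast
  have vV: "v \<in> V" using inV assms(6) by blast
  let ?W = "ballV E r v - {v}"
  have conn: "\<And>x y. x \<in> ?W \<Longrightarrow> y \<in> ?W \<Longrightarrow> same_comp ?W (ballE E r v) x y"
    using assms(10) vV unfolding local_cutvertex_def disconnected_def by blast
  have av: "a \<noteq> v" "a' \<noteq> v" using irr assms(4,6) by auto
  have aW: "a \<in> ?W"
  proof -
    have "closed_walk_at E r v [v, a, v]" using assms(2,6) sym
      by (simp add: closed_walk_at_def walk_Cons2 walk_single)
    then show ?thesis using av unfolding ballV_def by force
  qed
  have a'W: "a' \<in> ?W"
  proof -
    have "closed_walk_at E r v [v, a', v]" using assms(2,4) sym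
      by (simp add: closed_walk_at_def walk_Cons2 walk_single)
    then show ?thesis using av unfolding ballV_def by force
  qed
  have vB: "v \<in> B" "v \<in> B'" using AB(1) AB'(1) by auto
  have main: "x = v" if xB: "x \<in> B" "x \<in> B'" for x
  proof (rule ccontr)
    assume xv: "x \<noteq> v"
    have "a' \<notin> B'" using AB'(1) assms(9) assms(7) av by auto
    hence xa': "x \<noteq> a'" using xB by blast
    have "a \<notin> B" using AB(1) assms(8) assms(7) av by auto
    hence xa: "x \<noteq> a" using xB by blast
    have xN1: "x \<in> nbhd2 V E a' v" using xB AB(2) xv xa' by blast
    have xN2: "x \<in> nbhd2 V E a v" using xB AB'(2) xv xa by blast
    have aN1: "a \<in> nbhd2 V E a' v" using inV assms(6,7) av unfolding nbhd2_def by blast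
    have a'N2: "a' \<in> nbhd2 V E a v" using inV assms(4,7) av unfolding nbhd2_def by blast
    have xW: "x \<in> ?W"
    proof (cases "E x v")
      case True
      have "closed_walk_at E r v [v, x, v]" using assms(2) True sym
        by (simp add: closed_walk_at_def walk_Cons2 walk_single)
      then show ?thesis using xv unfolding ballV_def by force
    next
      case False
      then have "E x a'" "E x a" using xN1 xN2 unfolding nbhd2_def by auto
      then have "closed_walk_at E r v [v, a, x, a', v]" using assms(2,4,6) sym
        by (simp add: closed_walk_at_def walk_Cons2 walk_single)
      then show ?thesis using xv unfolding ballV_def by force
    qed
    have "(\<lambda>p q. p \<in> ?W \<and> q \<in> ?W \<and> ballE E r v p q)\<^sup>*\<^sup>* x a"
      using conn[OF xW aW] unfolding same_comp_def by blast
    from path_to_set[OF this xW, of "{a, a'}"] xa xa'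
    obtain z u where z: "z \<in> {a, a'}"
      and pu: "(\<lambda>p q. p \<in> ?W - {a, a'} \<and> q \<in> ?W - {a, a'} \<and> ballE E r v p q)\<^sup>*\<^sup>* x u"
      and u: "u \<in> ?W - {a, a'}" "z \<in> ?W" "ballE E r v u z" by blast
    show False
    proof (cases "z = a")
      case True
      let ?W1 = "ballV E r v - {a', v}"
      have p1: "(\<lambda>p q. p \<in> ?W1 \<and> q \<in> ?W1 \<and> ballE E r v p q)\<^sup>*\<^sup>* x u"
        by (rule rt_mono[OF pu]) blast
      have "(\<lambda>p q. p \<in> ?W1 \<and> q \<in> ?W1 \<and> ballE E r v p q)\<^sup>*\<^sup>* x a"
        using rtranclp.rtrancl_into_rtrancl[OF p1, of a] u True assms(7) by blast
      hence "same_comp ?W1 (ballE E r v) x a" unfolding same_comp_def using xW xa' aW assms(7) by blast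
      hence "conn_adj V E r a' v x a" unfolding conn_adj_def using xN1 aN1 xa by blast
      hence "same_comp (nbhd2 V E a' v) (conn_adj V E r a' v) x a"
        unfolding same_comp_def using xN1 aN1 by auto
      hence "x \<in> A" using cls1 xN1 aN1 assms(8) by blast
      thus False using AB(1) xB xa' xv by blast
    next
      case False
      hence za: "z = a'" using z by blast
      let ?W1 = "ballV E r v - {a, v}"
      have p1: "(\<lambda>p q. p \<in> ?W1 \<and> q \<in> ?W1 \<and> ballE E r v p q)\<^sup>*\<^sup>* x u"
        by (rule rt_mono[OF pu]) blast
      have "(\<lambda>p q. p \<in> ?W1 \<and> q \<in> ?W1 \<and> ballE E r v p q)\<^sup>*\<^sup>* x a'"
        using rtranclp.rtrancl_into_rtrancl[OF p1, of a'] u za assms(7) by blast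
      hence "same_comp ?W1 (ballE E r v) x a'" unfolding same_comp_def using xW xa a'W assms(7) by blast
      hence "conn_adj V E r a v x a'" unfolding conn_adj_def using xN2 a'N2 xa' by blast
      hence "same_comp (nbhd2 V E a v) (conn_adj V E r a v) x a'"
        unfolding same_comp_def using xN2 a'N2 by auto
      hence "x \<in> A'" using cls2 xN2 a'N2 assms(9) by blast
      thus False using AB'(1) xB xa xv by blast
    qed
  qed
  show ?thesis using main vB by blast
qed

end
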